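(* Let $K>0$, $S=1/K$, let $\eta:(0,K]\to[0,\infty)$ with $\eta(K)=0$, set $\phi(k)=k\eta(k)$ ($\phi(0)=0$) and $\theta(s)=\eta(1/s)$ for $s\ge S$, and let $\Psi:\mathbb{R}^3\to\mathbb{R}$ be arbitrary. Let $\Delta t,\Delta N>0$ satisfy $$\frac{\Delta N}{\Delta t}\ge\sup_{k\in[0,K)}\frac{\phi(k)}{1-k/K}.$$ Consider vehicles $N$ with leaders $N-\Delta N$, where the first (lead) vehicle follows a prescribed trajectory that is non-decreasing in time, and every other vehicle has arbitrary initial speed and is updated by $$X_t(t+\Delta t,N)=\max\Big\{0,\ \min\Big\{\theta\Big(\tfrac{X(t,N-\Delta N)-X(t,N)}{\Delta N}\Big),\ X_t(t,N)+\Delta t\,A(t,N)\Big\}\Big\},$$ $$X(t+\Delta t,N)=\max\Big\{X(t,N),\ \min\Big\{X(t,N)+\Delta t\,\theta\Big(\tfrac{X(t,N-\Delta N)-X(t,N)}{\Delta N}\Big),\ X(t,N)+\Delta t\,X_t(t,N)+\Delta t^2A(t,N)\Big\}\Big\},$$ with $$A(t,N)=\Psi\Big(X_t(t,N),\ \tfrac{X(t,N-\Delta N)-X(t,N)}{\Delta N},\ \tfrac{X_t(t,N)-X_t(t,N-\Delta N)}{\Delta N}\Big).$$ If initially all spacings satisfy $X(0,N-\Delta N)-X(0,N)\ge S\Delta N$, then the model is forward-traveling and collision-free: for all time steps, $X_t(t+\Delta t,N)\ge 0$ and $X(t,N-\Delta N)-X(t,N)\ge S\Delta N$ for every following vehicle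 $N$.
   Context: This is the car-following form of a general second-order traffic model $v_t+vv_x=\Psi(v,1/k,v_x/k)$ after a correction that caps the acceleration. $X(t,N)$ is the location and $X_t(t,N)$ the speed at time $t$ of vehicle $N$; $\eta$ is the speed-density relation, $\phi$ the flow-density relation, $\theta$ the speed-spacing relation, $K$ the jam density, $S$ the jam spacing. Forward-traveling means speeds are never negative; collision-free means spacings never fall below $S\Delta N$. *)

theory Defs
  imports Main Complex_Main
begin

definition flow :: "(real \<Rightarrow> real) \<Rightarrow> real \<Rightarrow> real" where
  "flow eta k = (if k = 0 then 0 else k * eta k)"

definition spd :: "(real \<Rightarrow> real) \<Rightarrow> real \<Rightarrow> real" where
  "spd eta s = eta (1 / s)"

text \<open>Acceleration A(t,N) for vehicle i (leader i-1) at time step n.\<close>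
definition accel ::
  "(real \<Rightarrow> real \<Rightarrow> real \<Rightarrow> real) \<Rightarrow> real \<Rightarrow> (nat \<Rightarrow> nat \<Rightarrow> real) \<Rightarrow> (nat \<Rightarrow> nat \<Rightarrow> real)
     \<Rightarrow> nat \<Rightarrow> nat \<Rightarrow> real" where
  "accel Psi dN X V n i =
     Psi (V n i) ((X n (i - 1) - X n i) / dN) ((V n i - V n (i - 1)) / dN)"

end

theory Submission
  imports Defs
begin

lemma a1: "(s::real) \<ge> 1/K \<Longrightarrow> K > 0 \<Longrightarrow> s > 0"
  by (smt (verit) zero_less_divide_1_iff)
lemma a2: "(s::real) \<ge> 1/K \<Longrightarrow> K > 0 \<Longrightarrow> 1/s \<le> K"
proof -
  assume h: "s \<ge> 1/K" "K > 0"
  hence sp: "s > 0" by (rule a1)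
  have "1 \<le> s * K" using h by (simp add: divide_le_eq mult.commute)
  thus ?thesis using sp by (simp add: divide_le_eq mult.commute)
qed
lemma a3: "(k::real) > 0 \<Longrightarrow> K > 0 \<Longrightarrow> k < K \<Longrightarrow> dt > 0 \<Longrightarrow> k * e / (1 - k / K) \<le> dN / dt \<Longrightarrow> dt * e \<le> dN * (1/k - 1/K)"
proof -
  assume h: "k > 0" "K > 0" "k < K" "dt > 0" "k * e / (1 - k / K) \<le> dN / dt"
  have p: "1 - k/K > 0" using h by simp
  have "k * e \<le> dN / dt * (1 - k / K)" using h(5) p by (simp add: divide_le_eq)
  hence "dt * (k * e) \<le> dN * (1 - k / K)" using h(4) by (simp add: field_simps)
  also have "\<dots> = k * (dN * (1/k - 1/K))" using h(1) by (simp add: field_simps)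
  finally have "k * (dt * e) \<le> k * (dN * (1/k - 1/K))" by (simp add: ac_simps)
  thus ?thesis using h(1) by simp
qed
lemma a4: "(b::real) \<ge> 0 \<Longrightarrow> max a (min (a + b) c) \<le> a + b"
  by simp
lemma a5: "max (a::real) x \<ge> a" by simp

theorem theorem6p1:
  fixes K dt dN :: real
    and eta :: "real \<Rightarrow> real"
    and Psi :: "real \<Rightarrow> real \<Rightarrow> real \<Rightarrow> real"
    and X V :: "nat \<Rightarrow> nat \<Rightarrow> real"
  assumes K_pos: "K > 0"
    and eta_nonneg: "\<And>k. 0 < k \<Longrightarrow> k \<le> K \<Longrightarrow> eta k \<ge> 0"
    and eta_K: "eta K = 0"
    and dt_pos: "dt > 0" and dN_pos: "dN > 0"
    and cfl: "\<And>k. 0 \<le> k \<Longrightarrow> k < K \<Longrightarrow> flow eta k / (1 - k / K) \<le> dN / dt"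
    and lead_mono: "\<And>n. X n 0 \<le> X (Suc n) 0"
    and speed_upd: "\<And>n i. i \<ge> 1 \<Longrightarrow>
       V (Suc n) i = max 0 (min (spd eta ((X n (i - 1) - X n i) / dN))
                                (V n i + dt * accel Psi dN X V n i))"
    and pos_upd: "\<And>n i. i \<ge> 1 \<Longrightarrow>
       X (Suc n) i = max (X n i) (min (X n i + dt * spd eta ((X n (i - 1) - X n i) / dN))
                                      (X n i + dt * V n i + dt\<^sup>2 * accel Psi dN X V n i))"
    and init_spacing: "\<And>i. i \<ge> 1 \<Longrightarrow> X 0 (i - 1) - X 0 i \<ge> (1 / K) * dN"
  shows "\<forall>n i. i \<ge> 1 \<longrightarrow> V (Suc n) i \<ge> 0 \<and> X n (i - 1) - X n i \<ge> (1 / K) * dN"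
proof -
  have key: "dt * spd eta s \<le> dN * s - dN / K \<and> spd eta s \<ge> 0" if hs: "s \<ge> 1 / K" for s
  proof -
    define k where "k = 1 / s"
    have spos: "s > 0" using a1 hs K_pos by blast
    have kpos: "k > 0" using spos k_def by simp
    have kK: "k \<le> K" using a2 hs K_pos unfolding k_def by blast
    have e0: "eta k \<ge> 0" using eta_nonneg kpos kK by simp
    have sk: "s = 1 / k" using k_def spos by simp
    have sd: "spd eta s = eta k" unfolding spd_def k_def by simp
    show ?thesis
    proof (cases "k = K")
      case True
      then show ?thesis using eta_K sk sd by simp
    next
      case False
      hence kl: "k < K" using kK by simp
      have "flow eta k / (1 - k / K) \<le> dN / dt" using cfl kpos kl by simp
      hence c: "k * eta k / (1 - k / K) \<le> dN / dt" using kpos by (simp add: flow_def)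
      have "dt * eta k \<le> dN * (1 / k - 1 / K)" using a3[OF kpos K_pos kl dt_pos c] .
      then show ?thesis using e0 sk sd by (simp add: algebra_simps)
    qed
  qed
  have sp: "X n (i - 1) - X n i \<ge> (1 / K) * dN" if "i \<ge> 1" for n i
    using that
  proof (induction n arbitrary: i)
    case 0
    then show ?case using init_spacing by simp
  next
    case (Suc n)
    define s where "s = (X n (i - 1) - X n i) / dN"
    have ds: "dN * s = X n (i - 1) - X n i" using dN_pos unfolding s_def by simp
    have hs: "s \<ge> 1 / K" using Suc.IH[OF Suc.prems] dN_pos ds
      by (smt (verit) mult.commute mult_le_cancel_left_pos times_divide_eq_left mult_1 divide_inverse)
    from key[OF hs] have k1: "dt * spd eta s \<le> dN * s - dN / K" and k2: "spd eta s \<ge> 0" by auto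
    have b0: "dt * spd eta s \<ge> 0" using k2 dt_pos by simp
    have eq: "X (Suc n) i = max (X n i) (min (X n i + dt * spd eta s)
               (X n i + dt * V n i + dt\<^sup>2 * accel Psi dN X V n i))"
      using pos_upd[OF Suc.prems, of n] unfolding s_def .
    have up: "X (Suc n) i \<le> X n i + dt * spd eta s"
      unfolding eq by (rule a4[OF b0])
    have lead: "X (Suc n) (i - 1) \<ge> X n (i - 1)"
    proof (cases "i - 1 = 0")
      case True then show ?thesis using lead_mono by simp
    next
      case False
      hence "i - 1 \<ge> 1" by simp
      from pos_upd[OF this, of n] show ?thesis using a5 by metis
    qed
    have "dN / K = (1 / K) * dN" by simp
    then show ?case using up lead k1 ds by linarith
  qed
  show ?thesis
  proof (intro allI impI conjI)
    fix n i :: nat assume "i \<ge> 1"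
    show "X n (i - 1) - X n i \<ge> (1 / K) * dN" using sp[OF \<open>i \<ge> 1\<close>] .
    show "V (Suc n) i \<ge> 0" unfolding speed_upd[OF \<open>i \<ge> 1\<close>] by (rule a5)
  qed
qed

end
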